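(* Let $q\ge 1$, let $u:(0,\infty)\to[0,\infty)$, and put $\psi(s)=s\,u(s)$. Assume $\psi$ is non-decreasing on $(0,\infty)$ and bounded, with $\kappa:=\sup_{s>0}\psi(s)=\lim_{s\to\infty}\psi(s)$. Let $x_1,\dots,x_n\in\mathbb{R}^q$ be arbitrary data points, with the convention stated in the context for terms with $x_i=0$. (a) Let $\eta>0$ and suppose $\kappa<1$. Then every symmetric positive definite $q\times q$ matrix $\Sigma$ satisfying $$\Sigma=\frac1n\sum_{i=1}^n u(x_i^{\mathrm T}\Sigma^{-1}x_i)\,x_ix_i^{\mathrm T}+\eta I_q$$ satisfies $$\eta I_q\le \Sigma\le \frac{\eta}{1-\kappa}I_q .$$ (b) Let $0<\gamma\le 1$ and suppose $\kappa<1/(1-\gamma)$, i.e. $(1-\gamma)\kappa<1$. Then every symmetric positive definite $q\times q$ matrix $\Sigma$ satisfying $$\Sigma=(1-\gamma)\frac1n\sum_{i=1}^n u(x_i^{\mathrm T}\Sigma^{-1}x_i)\,x_ix_i^{\mathrm T}+\gamma I_q$$ satisfies $$\gamma I_q\le \Sigma\le \frac{\gamma}{1-(1-\gamma)\kappa}I_q .$$ Consequently, for any estimator defined, for every finite data set, as a positive definite solution of the equation in (a) (with $\eta>0$, $\kappa<1$), resp. of the equation in (b) (with $0<\gamma\le1$, $(1-\gamma)\kappa<1$), the finite-sample contamination breakdown point equals $1$ at every data set; i.e., the estimator cannot break down.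
   Context: Inequalities between symmetric matrices refer to the Loewner order: $A\le B$ means $B-A$ is positive semidefinite; $I_q$ is the $q\times q$ identity. Convention: if some data point $z=0$, the corresponding summand $u(z^{\mathrm T}Az)zz^{\mathrm T}$ is interpreted as the zero matrix. Finite-sample contamination breakdown point: for a data set $X=\{x_1,\dots,x_n\}$ and $m\ge1$, add arbitrary points $Y=\{y_1,\dots,y_m\}$ to form $Z=X\cup Y$. For a scatter statistic $V(\cdot)$ (taking values in positive definite matrices), breakdown at contamination level $m/(n+m)$ occurs if, over all choices of $Y$ with $|Y|=m$, either $V(Z)$ fails to exist for some $Y$, or the largest eigenvalue of $V(Z)$ is unbounded, or the smallest eigenvalue of $V(Z)$ is not bounded away from $0$ (equivalently $\sup_Y\|\log(V(X)^{-1/2}V(Z)V(X)^{-1/2})\|_F=\infty$). The breakdown point is the smallest $m/(n+m)$ at which breakdown occurs; it is said to equal $1$ when breakdown never occurs, for any $m$. *)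

theory Defs
  imports "HOL-Analysis.Analysis"
begin

definition spd :: "real^'q^'q \<Rightarrow> bool" where
  "spd A \<longleftrightarrow> transpose A = A \<and> (\<forall>x. x \<noteq> 0 \<longrightarrow> x \<bullet> (A *v x) > 0)"

definition loewner_le :: "real^'q^'q \<Rightarrow> real^'q^'q \<Rightarrow> bool" where
  "loewner_le A B \<longleftrightarrow> (\<forall>x. x \<bullet> ((B - A) *v x) \<ge> 0)"

definition outer :: "real^'q \<Rightarrow> real^'q^'q" where
  "outer x = (\<chi> i j. x $ i * x $ j)"

definition wterm :: "(real \<Rightarrow> real) \<Rightarrow> real^'q^'q \<Rightarrow> real^'q \<Rightarrow> real^'q^'q" where
  "wterm u A z = (if z = 0 then 0 else u (z \<bullet> (A *v z)) *\<^sub>R outer z)"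

definition msum :: "(real \<Rightarrow> real) \<Rightarrow> (real^'q) list \<Rightarrow> real^'q^'q \<Rightarrow> real^'q^'q" where
  "msum u xs S = (1 / real (length xs)) *\<^sub>R sum_list (map (wterm u (matrix_inv S)) xs)"

(* breakdown at contamination level m/(n+m) for an (everywhere defined) scatter
   statistic V on finite data sets (lists): the eigenvalues of V(X \<union> Y) are not
   bounded above, or not bounded away from 0, uniformly over Y with |Y| = m *)
definition breaks_down :: "((real^'q) list \<Rightarrow> real^'q^'q) \<Rightarrow> (real^'q) list \<Rightarrow> nat \<Rightarrow> bool" where
  "breaks_down V X m \<longleftrightarrow>
     \<not> (\<exists>c>0. \<exists>C. \<forall>Y. length Y = m \<longrightarrow>
          loewner_le (c *\<^sub>R mat 1) (V (X @ Y)) \<and> loewner_le (V (X @ Y)) (C *\<^sub>R mat 1))"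

definition breakdown_point :: "((real^'q) list \<Rightarrow> real^'q^'q) \<Rightarrow> (real^'q) list \<Rightarrow> real" where
  "breakdown_point V X =
     (if \<exists>m\<ge>1. breaks_down V X m
      then (let m = (LEAST m. m \<ge> 1 \<and> breaks_down V X m) in real m / real (length X + m))
      else 1)"

end

theory Submission
  imports Defs
begin

lemma qf_scale: fixes A :: "real^'n^'n" shows "v \<bullet> ((c *\<^sub>R A) *v v) = c * (v \<bullet> (A *v v))"
proof -
  have "(c *\<^sub>R A) *v v = c *\<^sub>R (A *v v)" using scaleR_matrix_vector_assoc[of c A v] by simp
  then show ?thesis by simp
qed
lemma qf_sum_list:
  fixes f :: "'a \<Rightarrow> real^'n^'n"
  shows "v \<bullet> (sum_list (map f xs) *v v) = (\<Sum>z\<leftarrow>xs. v \<bullet> (f z *v v))"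
  by (induction xs) (auto simp: matrix_vector_mult_add_rdistrib inner_add_right)
lemma sum_list_le_len:
  fixes f :: "'a \<Rightarrow> real"
  assumes "\<And>z. z \<in> set xs \<Longrightarrow> f z \<le> B"
  shows "(\<Sum>z\<leftarrow>xs. f z) \<le> real (length xs) * B"
  using assms
proof (induction xs)
  case (Cons a xs)
  then have "f a \<le> B" "(\<Sum>z\<leftarrow>xs. f z) \<le> real (length xs) * B" by auto
  then show ?case by (simp add: algebra_simps)
qed simp

lemma sum_list_nonneg':
  fixes f :: "'a \<Rightarrow> real"
  assumes "\<And>z. z \<in> set xs \<Longrightarrow> f z \<ge> 0"
  shows "(\<Sum>z\<leftarrow>xs. f z) \<ge> 0"
  using assms by (induction xs) auto
lemma spd_inv:
  fixes S :: "real^'q^'q"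
  assumes "spd S"
  shows "S ** matrix_inv S = mat 1 \<and> matrix_inv S ** S = mat 1"
proof -
  have "\<forall>x. S *v x = 0 \<longrightarrow> x = 0"
    using assms unfolding spd_def by (metis inner_zero_right less_irrefl)
  then have "invertible S" using matrix_left_invertible_ker invertible_left_inverse by blast
  then show ?thesis unfolding invertible_def matrix_inv_def by (rule someI_ex)
qed

lemma qf_outer: "v \<bullet> (outer z *v v) = (z \<bullet> v)^2"
proof -
  have "outer z *v v = (z \<bullet> v) *\<^sub>R z"
    unfolding outer_def matrix_vector_mult_def vec_eq_iff inner_vec_def
    by (simp add: sum_distrib_left mult_ac)
  then show ?thesis by (simp add: power2_eq_square inner_commute)
qed

lemma inv_qf_bound:
  fixes S :: "real^'q^'q"
  assumes "spd S" and lam: "\<And>v. v \<bullet> (S *v v) \<le> lam * (v \<bullet> v)" and "lam > 0"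
  shows "x \<bullet> x \<le> lam * (x \<bullet> (matrix_inv S *v x))"
proof -
  define y where "y = matrix_inv S *v x"
  have Sy: "S *v y = x" using spd_inv[OF assms(1)] unfolding y_def
    by (simp add: matrix_vector_mul_assoc)
  have sym: "transpose S = S" using assms(1) spd_def by auto
  have ySx: "y \<bullet> (S *v x) = x \<bullet> x"
    by (metis Sy dot_lmul_matrix inner_commute sym transpose_matrix_vector)
  have psd: "w \<bullet> (S *v w) \<ge> 0" for w
    using assms(1) unfolding spd_def by (cases "w = 0") (auto intro: less_imp_le)
  define w where "w = lam *\<^sub>R y - x"
  have "w \<bullet> (S *v w) = lam^2 * (y \<bullet> (S *v y)) - lam * (y \<bullet> (S *v x)) - lam * (x \<bullet> (S *v y)) + x \<bullet> (S *v x)"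
    unfolding w_def by (simp add: matrix_vector_mult_diff_distrib inner_diff_left inner_diff_right
        flip: matrix_scaleR_vector_ac) (simp add: algebra_simps power2_eq_square)
  also have "\<dots> = lam^2 * (y \<bullet> x) - lam * (x \<bullet> x) - lam * (x \<bullet> x) + x \<bullet> (S *v x)"
    using Sy ySx by simp
  also have "\<dots> \<le> lam^2 * (y \<bullet> x) - lam * (x \<bullet> x)"
    using lam[of x] by simp
  finally have "0 \<le> lam * (lam * (y \<bullet> x) - x \<bullet> x)"
    using psd[of w] by (simp add: algebra_simps power2_eq_square)
  then have "x \<bullet> x \<le> lam * (y \<bullet> x)" using \<open>lam > 0\<close>
    by (simp add: zero_le_mult_iff)
  then show ?thesis by (simp add: y_def inner_commute)
qed


lemma inv_pos:
  fixes S :: "real^'q^'q"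
  assumes "spd S" "z \<noteq> 0"
  shows "z \<bullet> (matrix_inv S *v z) > 0"
proof -
  define y where "y = matrix_inv S *v z"
  have Sy: "S *v y = z" using spd_inv[OF assms(1)] unfolding y_def
    by (simp add: matrix_vector_mul_assoc)
  have "y \<noteq> 0" using Sy assms(2) by auto
  then have "y \<bullet> (S *v y) > 0" using assms(1) unfolding spd_def by auto
  then show ?thesis using Sy by (simp add: y_def[symmetric] inner_commute)
qed

lemma qf_id: "x \<bullet> ((c *\<^sub>R mat 1 :: real^'n^'n) *v x) = c * (x \<bullet> x)"
  using qf_scale[of x c "mat 1 :: real^'n^'n"] by simp

lemma loewner_qf: "loewner_le A B \<longleftrightarrow> (\<forall>x. x \<bullet> (A *v x) \<le> x \<bullet> (B *v x))"
  unfolding loewner_le_def by (simp add: matrix_vector_mult_diff_rdistrib inner_diff_right)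

lemma main_bounds:
  fixes S :: "real^'q^'q" and u :: "real \<Rightarrow> real"
  assumes u_nonneg: "\<And>s. s > 0 \<Longrightarrow> u s \<ge> 0"
    and psiK: "\<And>s. s > 0 \<Longrightarrow> s * u s \<le> kappa"
    and c: "c \<ge> 0" "c * kappa < 1" and eta: "eta > 0" and xs: "xs \<noteq> []"
    and spd: "spd S" and Seq: "S = c *\<^sub>R msum u xs S + eta *\<^sub>R mat 1"
  shows "loewner_le (eta *\<^sub>R mat 1) S \<and> loewner_le S ((eta / (1 - c * kappa)) *\<^sub>R mat 1)"
proof -
  define Si where "Si = matrix_inv S"
  define n where "n = real (length xs)"
  have n: "n > 0" using xs by (simp add: n_def)
  define T where "T z v = v \<bullet> (wterm u Si z *v v)" for z v
  have qS: "v \<bullet> (S *v v) = c * ((1/n) * (\<Sum>z\<leftarrow>xs. T z v)) + eta * (v \<bullet> v)" for v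
  proof -
    have "v \<bullet> (S *v v) = v \<bullet> ((c *\<^sub>R msum u xs S + eta *\<^sub>R mat 1) *v v)"
      using Seq by simp
    also have "\<dots> = c * ((1/n) * (\<Sum>z\<leftarrow>xs. T z v)) + eta * (v \<bullet> v)"
      by (simp add: matrix_vector_mult_add_rdistrib inner_add_right qf_scale qf_id msum_def
          qf_sum_list T_def n_def Si_def)
    finally show ?thesis .
  qed
  have Tz: "T z v = (if z = 0 then 0 else u (z \<bullet> (Si *v z)) * (z \<bullet> v)^2)" for z v
    by (simp add: T_def wterm_def qf_scale qf_outer)
  have spos: "z \<noteq> 0 \<Longrightarrow> z \<bullet> (Si *v z) > 0" for z
    using inv_pos[OF spd] by (simp add: Si_def)
  have Tnn: "T z v \<ge> 0" for z v
    using Tz[of z v] spos[of z] u_nonneg by auto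
  have kappa0: "kappa \<ge> 0" using psiK[of 1] u_nonneg[of 1] by simp
  have lower: "v \<bullet> (S *v v) \<ge> eta * (v \<bullet> v)" for v
  proof -
    have "(\<Sum>z\<leftarrow>xs. T z v) \<ge> 0" by (rule sum_list_nonneg') (use Tnn in auto)
    then have "c * ((1/n) * (\<Sum>z\<leftarrow>xs. T z v)) \<ge> 0" using c n by simp
    then show ?thesis using qS[of v] by linarith
  qed
  define L where "L = {lam. lam > 0 \<and> (\<forall>v. v \<bullet> (S *v v) \<le> lam * (v \<bullet> v))}"
  obtain K where K: "\<And>v. norm (S *v v) \<le> norm v * K"
    using bounded_linear.bounded[OF matrix_vector_mul_bounded_linear[of S]] by blast
  have "max K 1 \<in> L"
  proof -
    have "v \<bullet> (S *v v) \<le> max K 1 * (v \<bullet> v)" for v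
    proof -
      have "v \<bullet> (S *v v) \<le> norm v * norm (S *v v)" by (rule norm_cauchy_schwarz)
      also have "\<dots> \<le> norm v * (norm v * K)" by (rule mult_left_mono[OF K]) simp
      also have "\<dots> \<le> norm v * (norm v * max K 1)"
        by (intro mult_left_mono) auto
      also have "\<dots> = max K 1 * (v \<bullet> v)" by (simp add: power2_norm_eq_inner[symmetric] power2_eq_square)
      finally show ?thesis .
    qed
    then show ?thesis unfolding L_def by auto
  qed
  then have Lne: "L \<noteq> {}" by blast
  have Lbdd: "bdd_below L" unfolding L_def by (rule bdd_belowI[of _ 0]) auto
  define lam where "lam = Inf L"
  have lamv: "v \<bullet> (S *v v) \<le> lam * (v \<bullet> v)" for v
  proof (cases "v = 0")
    case False
    then have vv: "v \<bullet> v > 0" by simp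
    have "v \<bullet> (S *v v) / (v \<bullet> v) \<le> lam" unfolding lam_def
    proof (rule cInf_greatest[OF Lne])
      fix l assume "l \<in> L"
      then have "v \<bullet> (S *v v) \<le> l * (v \<bullet> v)" unfolding L_def by auto
      then show "v \<bullet> (S *v v) / (v \<bullet> v) \<le> l" using vv by (simp add: divide_le_eq)
    qed
    then show ?thesis using vv by (simp add: divide_le_eq)
  qed simp
  obtain e :: "real^'q" where e: "e \<noteq> 0" using zero_neq_one[where 'a="real^'q"] by blast
  have "e \<bullet> (S *v e) > 0" using spd e unfolding spd_def by auto
  then have "0 < lam * (e \<bullet> e)" using lamv[of e] by linarith
  then have lampos: "lam > 0" using e inner_ge_zero[of e] by (auto simp: zero_less_mult_iff)
  have Tub: "T z v \<le> kappa * lam * (v \<bullet> v)" for z v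
  proof (cases "z = 0")
    case True then show ?thesis using Tz kappa0 lampos by simp
  next
    case False
    define s where "s = z \<bullet> (Si *v z)"
    have s: "s > 0" using spos[OF False] s_def by simp
    have us: "u s \<ge> 0" using u_nonneg[OF s] .
    have zz: "z \<bullet> z \<le> lam * s"
      using inv_qf_bound[OF spd lamv lampos, of z] by (simp add: s_def Si_def)
    have "T z v = u s * (z \<bullet> v)^2" using Tz False s_def by simp
    also have "\<dots> \<le> u s * ((z \<bullet> z) * (v \<bullet> v))"
      by (rule mult_left_mono[OF Cauchy_Schwarz_ineq us])
    also have "\<dots> \<le> u s * ((lam * s) * (v \<bullet> v))"
      by (intro mult_left_mono mult_right_mono zz us) simp
    also have "\<dots> = (s * u s) * lam * (v \<bullet> v)" by simp
    also have "\<dots> \<le> kappa * lam * (v \<bullet> v)"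
      by (intro mult_right_mono psiK s) (use lampos in auto)
    finally show ?thesis .
  qed
  have upper1: "v \<bullet> (S *v v) \<le> (c * kappa * lam + eta) * (v \<bullet> v)" for v
  proof -
    have "(\<Sum>z\<leftarrow>xs. T z v) \<le> n * (kappa * lam * (v \<bullet> v))"
      unfolding n_def by (rule sum_list_le_len) (use Tub in auto)
    then have "(1/n) * (\<Sum>z\<leftarrow>xs. T z v) \<le> kappa * lam * (v \<bullet> v)"
      using n by (simp add: field_simps)
    then have "c * ((1/n) * (\<Sum>z\<leftarrow>xs. T z v)) \<le> c * (kappa * lam * (v \<bullet> v))"
      using c by (intro mult_left_mono) auto
    then show ?thesis using qS[of v] by (simp add: algebra_simps)
  qed
  have "c * kappa * lam \<ge> 0" using c kappa0 lampos by simp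
  then have "c * kappa * lam + eta \<in> L"
    unfolding L_def using upper1 eta by auto
  then have "lam \<le> c * kappa * lam + eta" unfolding lam_def by (rule cInf_lower[OF _ Lbdd])
  then have "lam * (1 - c * kappa) \<le> eta" by (simp add: algebra_simps)
  then have lamC: "lam \<le> eta / (1 - c * kappa)" using c by (simp add: field_simps)
  show ?thesis
  proof
    show "loewner_le (eta *\<^sub>R mat 1) S" unfolding loewner_qf qf_id using lower by auto
    show "loewner_le S ((eta / (1 - c * kappa)) *\<^sub>R mat 1)" unfolding loewner_qf qf_id
    proof
      fix x :: "real^'q"
      have "lam * (x \<bullet> x) \<le> eta / (1 - c * kappa) * (x \<bullet> x)"
        by (rule mult_right_mono[OF lamC]) simp
      then show "x \<bullet> (S *v x) \<le> eta / (1 - c * kappa) * (x \<bullet> x)" using lamv[of x] by linarith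
    qed
  qed
qed

theorem theorem1:
  fixes u :: "real \<Rightarrow> real" and kappa :: real
  assumes u_nonneg: "\<And>s. s > 0 \<Longrightarrow> u s \<ge> 0"
    and psi_mono: "mono_on {0<..} (\<lambda>s. s * u s)"
    and psi_bdd: "bdd_above ((\<lambda>s. s * u s) ` {0<..})"
    and kappa_def: "kappa = (SUP s\<in>{0<..}. s * u s)"
  shows
   "(\<forall>(eta::real) (xs :: (real^'q) list) (S :: real^'q^'q).
       eta > 0 \<and> kappa < 1 \<and> xs \<noteq> [] \<and> spd S \<and> S = msum u xs S + eta *\<^sub>R mat 1 \<longrightarrow>
       loewner_le (eta *\<^sub>R mat 1) S \<and> loewner_le S ((eta / (1 - kappa)) *\<^sub>R mat 1))
  \<and> (\<forall>(gamma::real) (xs :: (real^'q) list) (S :: real^'q^'q).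
       0 < gamma \<and> gamma \<le> 1 \<and> (1 - gamma) * kappa < 1 \<and> xs \<noteq> [] \<and> spd S \<and>
       S = (1 - gamma) *\<^sub>R msum u xs S + gamma *\<^sub>R mat 1 \<longrightarrow>
       loewner_le (gamma *\<^sub>R mat 1) S \<and>
       loewner_le S ((gamma / (1 - (1 - gamma) * kappa)) *\<^sub>R mat 1))
  \<and> (\<forall>(eta::real) (V :: (real^'q) list \<Rightarrow> real^'q^'q).
       eta > 0 \<and> kappa < 1 \<and>
       (\<forall>zs. zs \<noteq> [] \<longrightarrow> spd (V zs) \<and> V zs = msum u zs (V zs) + eta *\<^sub>R mat 1) \<longrightarrow>
       (\<forall>X. X \<noteq> [] \<longrightarrow> breakdown_point V X = 1))
  \<and> (\<forall>(gamma::real) (V :: (real^'q) list \<Rightarrow> real^'q^'q).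
       0 < gamma \<and> gamma \<le> 1 \<and> (1 - gamma) * kappa < 1 \<and>
       (\<forall>zs. zs \<noteq> [] \<longrightarrow> spd (V zs) \<and>
              V zs = (1 - gamma) *\<^sub>R msum u zs (V zs) + gamma *\<^sub>R mat 1) \<longrightarrow>
       (\<forall>X. X \<noteq> [] \<longrightarrow> breakdown_point V X = 1))"
proof -
  have psiK: "\<And>s. s > 0 \<Longrightarrow> s * u s \<le> kappa"
    unfolding kappa_def by (rule cSUP_upper[OF _ psi_bdd]) simp
  have A: "loewner_le (eta *\<^sub>R mat 1) S \<and> loewner_le S ((eta / (1 - c * kappa)) *\<^sub>R mat 1)"
    if "c \<ge> 0" "c * kappa < 1" "eta > 0" "xs \<noteq> []" "spd S" "S = c *\<^sub>R msum u xs S + eta *\<^sub>R mat 1"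
    for c eta and xs :: "(real^'q) list" and S :: "real^'q^'q"
    by (rule main_bounds[OF u_nonneg psiK that]) auto
  have B: "breakdown_point V X = 1"
    if "c \<ge> 0" "c * kappa < 1" "eta > 0" "X \<noteq> []"
      "\<forall>zs. zs \<noteq> [] \<longrightarrow> spd (V zs) \<and> V zs = c *\<^sub>R msum u zs (V zs) + eta *\<^sub>R mat 1"
    for c eta and X :: "(real^'q) list" and V
  proof -
    have "\<not> breaks_down V X m" for m
    proof -
      have "\<forall>Y. length Y = m \<longrightarrow> loewner_le (eta *\<^sub>R mat 1) (V (X @ Y)) \<and>
          loewner_le (V (X @ Y)) ((eta / (1 - c * kappa)) *\<^sub>R mat 1)"
      proof (intro allI impI)
        fix Y :: "(real^'q) list"
        have "X @ Y \<noteq> []" using that(4) by simp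
        then show "loewner_le (eta *\<^sub>R mat 1) (V (X @ Y)) \<and>
            loewner_le (V (X @ Y)) ((eta / (1 - c * kappa)) *\<^sub>R mat 1)"
          using A[OF that(1-3)] that(5) by blast
      qed
      then show ?thesis unfolding breaks_down_def using that(3) by blast
    qed
    then show ?thesis unfolding breakdown_point_def by auto
  qed
  show ?thesis
  proof (intro conjI; intro allI impI)
    fix eta :: real and xs :: "(real^'q) list" and S :: "real^'q^'q"
    assume h: "eta > 0 \<and> kappa < 1 \<and> xs \<noteq> [] \<and> spd S \<and> S = msum u xs S + eta *\<^sub>R mat 1"
    show "loewner_le (eta *\<^sub>R mat 1) S \<and> loewner_le S ((eta / (1 - kappa)) *\<^sub>R mat 1)"
      using A[of 1 eta xs S] h by simp
  next
    fix gamma :: real and xs :: "(real^'q) list" and S :: "real^'q^'q"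
    assume h: "0 < gamma \<and> gamma \<le> 1 \<and> (1 - gamma) * kappa < 1 \<and> xs \<noteq> [] \<and> spd S \<and>
       S = (1 - gamma) *\<^sub>R msum u xs S + gamma *\<^sub>R mat 1"
    show "loewner_le (gamma *\<^sub>R mat 1) S \<and>
       loewner_le S ((gamma / (1 - (1 - gamma) * kappa)) *\<^sub>R mat 1)"
      using A[of "1 - gamma" gamma xs S] h by simp
  next
    fix eta :: real and V :: "(real^'q) list \<Rightarrow> real^'q^'q" and X :: "(real^'q) list"
    assume h: "eta > 0 \<and> kappa < 1 \<and>
       (\<forall>zs. zs \<noteq> [] \<longrightarrow> spd (V zs) \<and> V zs = msum u zs (V zs) + eta *\<^sub>R mat 1)"
      and X: "X \<noteq> []"
    show "breakdown_point V X = 1" using B[of 1 eta X V] h X by simp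
  next
    fix gamma :: real and V :: "(real^'q) list \<Rightarrow> real^'q^'q" and X :: "(real^'q) list"
    assume h: "0 < gamma \<and> gamma \<le> 1 \<and> (1 - gamma) * kappa < 1 \<and>
       (\<forall>zs. zs \<noteq> [] \<longrightarrow> spd (V zs) \<and>
              V zs = (1 - gamma) *\<^sub>R msum u zs (V zs) + gamma *\<^sub>R mat 1)"
      and X: "X \<noteq> []"
    show "breakdown_point V X = 1" using B[of "1 - gamma" gamma X V] h X by simp
  qed
qed

end
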